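(* Let $A$ be a real $m\times m$ matrix, $f$ in the range of $A$, $y$ the minimal-norm solution of $Ay=f$ (so $y\perp\mathcal{N}(A)$), and $q\in(0,1)$. Define $u_1=0$ and $u_{n+1}=q^nT_{q^n}^{-1}u_n+T_{q^n}^{-1}A^*f$ for $n\ge1$. Then $\lim_{n\to\infty}\|u_n-y\|=0$.
   Context: $A^*$ is the transpose of $A$, $T:=A^*A$, $T_a:=T+aI$ for $a>0$; $\mathcal{N}(A)=\{u:Au=0\}$; $\|\cdot\|$ is the Euclidean norm. *)

theory Defs
  imports "HOL-Analysis.Analysis"
begin

definition T_reg :: "real^'m^'m \<Rightarrow> real \<Rightarrow> real^'m^'m" where
  "T_reg A a = transpose A ** A + a *\<^sub>R mat 1"

definition is_min_norm_solution :: "real^'m^'m \<Rightarrow> real^'m \<Rightarrow> real^'m \<Rightarrow> bool" where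
  "is_min_norm_solution A f y \<longleftrightarrow> A *v y = f \<and> (\<forall>z. A *v z = f \<longrightarrow> norm y \<le> norm z)"

end

theory Submission
  imports Defs
begin

lemma Tv: "T_reg A a *v x = transpose A *v (A *v x) + a *\<^sub>R x"
  unfolding T_reg_def
  by (simp add: matrix_vector_mult_add_rdistrib matrix_vector_mul_assoc
        flip: scaleR_matrix_vector_assoc)

lemma quad: "(transpose A *v (A *v x)) \<bullet> z = (A *v x) \<bullet> ((A::real^'m^'m) *v z)"
  by (simp add: dot_lmul_matrix)

lemma T_inv:
  fixes A :: "real^'m^'m" assumes "a > 0"
  shows "T_reg A a *v (matrix_inv (T_reg A a) *v w) = w"
proof -
  have ker: "\<forall>x. T_reg A a *v x = 0 \<longrightarrow> x = 0"
  proof (intro allI impI)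
    fix x assume "T_reg A a *v x = 0"
    hence "(T_reg A a *v x) \<bullet> x = 0" by simp
    hence "(transpose A *v (A *v x)) \<bullet> x + a * (x \<bullet> x) = 0"
      by (simp add: Tv inner_add_left del: transpose_matrix_vector)
    hence "(A *v x) \<bullet> (A *v x) + a * (x \<bullet> x) = 0" by (simp only: quad)
    moreover have "(A *v x) \<bullet> (A *v x) \<ge> 0" by simp
    moreover have "x \<bullet> x \<ge> 0" by simp
    moreover have "0 \<le> a * (x \<bullet> x)" using assms by simp
    ultimately have "a * (x \<bullet> x) = 0" by linarith
    thus "x = 0" using assms by simp
  qed
  hence "invertible (T_reg A a)" using invertible_left_inverse matrix_left_invertible_ker by blast
  hence "T_reg A a ** matrix_inv (T_reg A a) = mat 1"
    unfolding invertible_def matrix_inv_def by (rule someI2_ex) auto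
  thus ?thesis by (metis matrix_vector_mul_assoc matrix_vector_mul_lid)
qed

lemma step:
  fixes A :: "real^'m^'m"
  assumes a: "a > 0" and c: "c \<ge> 0"
    and coer: "\<And>x. (\<forall>z. A *v z = 0 \<longrightarrow> x \<bullet> z = 0) \<Longrightarrow> c * norm x \<le> norm (A *v x)"
    and eq: "transpose A *v (A *v e') + a *\<^sub>R e' = a *\<^sub>R e"
    and eV: "\<forall>z. A *v z = 0 \<longrightarrow> e \<bullet> z = 0"
  shows "(\<forall>z. A *v z = 0 \<longrightarrow> e' \<bullet> z = 0) \<and> (a + c^2) * norm e' \<le> a * norm e"
proof
  show V: "\<forall>z. A *v z = 0 \<longrightarrow> e' \<bullet> z = 0"
  proof (intro allI impI)
    fix z assume z: "A *v z = 0"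
    have "(transpose A *v (A *v e') + a *\<^sub>R e') \<bullet> z = (a *\<^sub>R e) \<bullet> z" using eq by simp
    hence "(transpose A *v (A *v e')) \<bullet> z + a * (e' \<bullet> z) = a * (e \<bullet> z)"
      by (simp add: inner_add_left del: transpose_matrix_vector)
    hence "(A *v e') \<bullet> (A *v z) + a * (e' \<bullet> z) = a * (e \<bullet> z)" by (simp only: quad)
    thus "e' \<bullet> z = 0" using z eV a by simp
  qed
  have "(transpose A *v (A *v e') + a *\<^sub>R e') \<bullet> e' = (a *\<^sub>R e) \<bullet> e'" using eq by simp
  hence "(transpose A *v (A *v e')) \<bullet> e' + a * (e' \<bullet> e') = a * (e \<bullet> e')"
    by (simp add: inner_add_left del: transpose_matrix_vector)
  hence E: "(A *v e') \<bullet> (A *v e') + a * (e' \<bullet> e') = a * (e \<bullet> e')" by (simp only: quad)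
  have c1: "c * norm e' \<le> norm (A *v e')" using coer V by blast
  have "(c * norm e')^2 \<le> (norm (A *v e'))^2"
    using c1 c by (intro power_mono) auto
  hence "c^2 * (norm e')^2 \<le> (A *v e') \<bullet> (A *v e')" by (simp add: power_mult_distrib power2_norm_eq_inner)
  moreover have "e \<bullet> e' \<le> norm e * norm e'" by (rule norm_cauchy_schwarz)
  ultimately have h1: "c^2 * (norm e')^2 \<le> (A *v e') \<bullet> (A *v e')" and h2: "a * (e \<bullet> e') \<le> a * (norm e * norm e')"
    using a by (auto intro: mult_left_mono)
  have h3: "e' \<bullet> e' = (norm e')^2" by (simp add: power2_norm_eq_inner)
  have h4: "(a + c^2) * (norm e')^2 = c^2 * (norm e')^2 + a * (norm e')^2" by (simp add: algebra_simps)
  have "(a + c^2) * (norm e')^2 \<le> a * (norm e * norm e')"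
    using E h1 h2 h4 by (simp add: h3)
  hence "((a + c^2) * norm e') * norm e' \<le> (a * norm e) * norm e'"
    by (simp add: power2_eq_square algebra_simps)
  thus "(a + c^2) * norm e' \<le> a * norm e"
  proof (cases "norm e' = 0")
    case True thus ?thesis using a by simp
  next
    case False hence "norm e' > 0" by simp
    thus ?thesis using \<open>((a + c^2) * norm e') * norm e' \<le> (a * norm e) * norm e'\<close> mult_right_le_imp_le by blast
  qed
qed

lemma minnorm_orth:
  fixes A :: "real^'m^'m"
  assumes "is_min_norm_solution A f y" "A *v z = 0"
  shows "y \<bullet> z = 0"
proof -
  let ?s = "y \<bullet> z" and ?N = "z \<bullet> z"
  define t where "t = - ?s / (?N + 1)"
  have N: "?N \<ge> 0" by simp
  have "A *v (y + t *\<^sub>R z) = f" using assms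
    by (simp add: is_min_norm_solution_def matrix_vector_right_distrib matrix_vector_mult_scaleR)
  hence "norm y \<le> norm (y + t *\<^sub>R z)" using assms(1) unfolding is_min_norm_solution_def by blast
  hence "(norm y)^2 \<le> (norm (y + t *\<^sub>R z))^2" by (simp add: power_mono)
  hence "y \<bullet> y \<le> (y + t *\<^sub>R z) \<bullet> (y + t *\<^sub>R z)" by (simp add: power2_norm_eq_inner)
  hence "0 \<le> 2 * t * ?s + t^2 * ?N"
    by (simp add: inner_add_left inner_add_right inner_commute power2_eq_square algebra_simps)
  hence "0 \<le> (2 * t * ?s + t^2 * ?N) * (?N + 1)^2" using N by simp
  also have "(2 * t * ?s + t^2 * ?N) * (?N + 1)^2 = ?s^2 * (- ?N - 2)"
  proof -
    have "?N + 1 \<noteq> 0" using N by linarith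
    hence tt: "t * (?N + 1) = - ?s" unfolding t_def by simp
    have "(2 * t * ?s + t^2 * ?N) * (?N + 1)^2 = 2 * ?s * (t * (?N + 1)) * (?N + 1) + (t * (?N + 1))^2 * ?N"
      by (simp add: power2_eq_square algebra_simps)
    also have "\<dots> = ?s^2 * (- ?N - 2)" unfolding tt by (simp add: power2_eq_square algebra_simps)
    finally show ?thesis .
  qed
  finally have "?s^2 * (- ?N - 2) \<ge> 0" .
  hence "?s^2 * (?N + 2) \<le> 0" by (simp add: algebra_simps)
  hence "?s^2 \<le> 0" using N by (simp add: mult_le_0_iff)
  thus ?thesis by simp
qed

theorem theorem3p1:
  fixes A :: "real^'m^'m" and f y :: "real^'m" and q :: real and u :: "nat \<Rightarrow> real^'m"
  assumes f_range: "f \<in> range (\<lambda>x. A *v x)"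
    and y_min: "is_min_norm_solution A f y"
    and q: "0 < q" "q < 1"
    and u1: "u 1 = 0"
    and urec: "\<And>n. n \<ge> 1 \<Longrightarrow>
       u (n + 1) = q ^ n *\<^sub>R (matrix_inv (T_reg A (q ^ n)) *v u n)
                   + matrix_inv (T_reg A (q ^ n)) *v (transpose A *v f)"
  shows "(\<lambda>n. norm (u n - y)) \<longlonglongrightarrow> 0"
proof -
  define V where "V = {x. \<forall>z. A *v z = 0 \<longrightarrow> x \<bullet> z = 0}"
  have subV: "subspace V" unfolding V_def subspace_def
    by (auto simp: inner_add_left)
  have "\<exists>c>0. \<forall>x\<in>V. norm (A *v x) \<ge> c * norm x"
  proof (rule injective_imp_isometric)
    show "closed V" using subV closed_subspace by blast
    show "subspace V" by (rule subV)
    show "bounded_linear ((*v) A)" by simp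
    show "\<forall>x\<in>V. A *v x = 0 \<longrightarrow> x = 0" unfolding V_def by auto
  qed
  then obtain c where c: "c > 0" and coer0: "\<And>x. x \<in> V \<Longrightarrow> c * norm x \<le> norm (A *v x)"
    by blast
  have coer: "\<And>x. (\<forall>z. A *v z = 0 \<longrightarrow> x \<bullet> z = 0) \<Longrightarrow> c * norm x \<le> norm (A *v x)"
    using coer0 unfolding V_def by blast
  have fy: "f = A *v y" using y_min unfolding is_min_norm_solution_def by simp
  define E where "E n = u n - y" for n
  have Eeq: "transpose A *v (A *v E (n+1)) + q^n *\<^sub>R E (n+1) = q^n *\<^sub>R E n" if n: "n \<ge> 1" for n
  proof -
    have a: "q^n > 0" using q by simp
    let ?M = "matrix_inv (T_reg A (q ^ n))"
    have "T_reg A (q^n) *v u (n+1) = q^n *\<^sub>R (T_reg A (q^n) *v (?M *v u n))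
            + T_reg A (q^n) *v (?M *v (transpose A *v f))"
      using urec[OF n] by (simp add: matrix_vector_right_distrib matrix_vector_mult_scaleR)
    also have "\<dots> = q^n *\<^sub>R u n + transpose A *v (A *v y)"
      using T_inv[OF a, of A "u n"] T_inv[OF a, of A "transpose A *v f"] fy
      by (simp del: transpose_matrix_vector)
    finally have "T_reg A (q^n) *v u (n+1) = q^n *\<^sub>R u n + transpose A *v (A *v y)" .
    hence "transpose A *v (A *v u (n+1)) + q^n *\<^sub>R u (n+1) = q^n *\<^sub>R u n + transpose A *v (A *v y)"
      by (simp only: Tv)
    thus ?thesis unfolding E_def
      by (simp add: matrix_vector_right_distrib scaleR_diff_right algebra_simps del: transpose_matrix_vector)
  qed
  have stp: "(\<forall>z. A *v z = 0 \<longrightarrow> E (n+1) \<bullet> z = 0) \<and> (q^n + c^2) * norm (E (n+1)) \<le> q^n * norm (E n)"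
    if "n \<ge> 1" "\<forall>z. A *v z = 0 \<longrightarrow> E n \<bullet> z = 0" for n
    using step[of "q^n" c A, OF _ _ coer Eeq[OF that(1)] that(2)] q c by simp
  have inv: "(\<forall>z. A *v z = 0 \<longrightarrow> E n \<bullet> z = 0) \<and> norm (E n) \<le> norm y" if "n \<ge> 1" for n
    using that
  proof (induction n rule: dec_induct)
    case base
    have "E 1 = - y" unfolding E_def using u1 by simp
    thus ?case using minnorm_orth[OF y_min] by simp
  next
    case (step n)
    have s: "(\<forall>z. A *v z = 0 \<longrightarrow> E (n+1) \<bullet> z = 0) \<and> (q^n + c^2) * norm (E (n+1)) \<le> q^n * norm (E n)"
      using stp step by blast
    have "0 \<le> c^2 * norm (E (n+1))" by simp
    moreover have "(q^n + c^2) * norm (E (n+1)) = q^n * norm (E (n+1)) + c^2 * norm (E (n+1))"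
      by (simp add: distrib_right)
    ultimately have "q^n * norm (E (n+1)) \<le> q^n * norm (E n)"
      using s by linarith
    hence "norm (E (n+1)) \<le> norm (E n)" using q by simp
    thus ?case using s step by simp
  qed
  have bnd: "norm (E (Suc n)) \<le> q^n * (norm y / c^2)" if "n \<ge> 1" for n
  proof -
    have s: "(q^n + c^2) * norm (E (n+1)) \<le> q^n * norm (E n)" using stp inv that by blast
    have "q^n * norm (E n) \<le> q^n * norm y" using inv that q by (simp add: mult_left_mono)
    moreover have "0 \<le> q^n * norm (E (n+1))" using q by simp
    moreover have "(q^n + c^2) * norm (E (n+1)) = q^n * norm (E (n+1)) + c^2 * norm (E (n+1))"
      by (simp add: distrib_right)
    ultimately have "c^2 * norm (E (Suc n)) \<le> q^n * norm y" using s by simp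
    thus ?thesis using c by (simp add: field_simps)
  qed
  have lim0: "(\<lambda>n. q^n * (norm y / c^2)) \<longlonglongrightarrow> 0"
    using q by (intro tendsto_mult_left_zero LIMSEQ_power_zero) simp
  have "(\<lambda>n. norm (E (Suc n))) \<longlonglongrightarrow> 0"
  proof (rule Lim_null_comparison[OF _ lim0])
    show "\<forall>\<^sub>F n in sequentially. norm (norm (E (Suc n))) \<le> q^n * (norm y / c^2)"
      using bnd eventually_sequentially by force
  qed
  hence "(\<lambda>n. norm (E n)) \<longlonglongrightarrow> 0" by (rule LIMSEQ_imp_Suc)
  thus ?thesis unfolding E_def .
qed

end
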